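(* Let $d\ge2$, $R=\mathbb{Z}[1/p: p\text{ prime},\,2\le p\le d]$, $S=R[s_1,\dots,s_{d-1}]$ graded by total degree, let \[f_{\mathbf{s}}(x)=\tfrac1dx^d-\tfrac1{d-1}(s_1+\cdots+s_{d-1})x^{d-1}+\cdots+(-1)^{d-1}s_1\cdots s_{d-1}x\in S[x]\] (the polynomial with $f_{\mathbf{s}}(0)=0$ and $f_{\mathbf{s}}'(x)=\prod_i(x-s_i)$), and let $F_i=f_{\mathbf{s}}(s_i)\in S$ for $1\le i\le d-1$. Then there exist an integer $D\ge1$ and elements $A_{ij}\in S$, each homogeneous of degree $D-d$, such that for every $i$, \[s_i^D=\sum_{j=1}^{d-1}A_{ij}F_j.\] *)

theory Defs
  imports "HOL-Library.Poly_Mapping" "HOL-Computational_Algebra.Polynomial"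
    "HOL-Computational_Algebra.Primes"
begin

text \<open>Multivariate polynomials over \<open>\<rat>\<close>: monomials are finitely supported
  exponent vectors \<open>nat \<Rightarrow>\<^sub>0 nat\<close> (variable \<open>s_i\<close> is index \<open>i\<close>).\<close>
type_synonym mpoly = "(nat \<Rightarrow>\<^sub>0 nat) \<Rightarrow>\<^sub>0 rat"

definition Rd :: "nat \<Rightarrow> rat set" where
  "Rd d = {q. \<exists>(a::int) (n::nat). n > 0 \<and> q = of_int a / of_nat n \<and>
                 (\<forall>p. prime p \<longrightarrow> p dvd n \<longrightarrow> p \<le> d)}"

definition in_S :: "nat \<Rightarrow> mpoly \<Rightarrow> bool" where
  "in_S d A \<longleftrightarrow> (\<forall>m \<in> Poly_Mapping.keys A. Poly_Mapping.keys m \<subseteq> {1..d-1} \<and> Poly_Mapping.lookup A m \<in> Rd d)"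

definition tdeg :: "(nat \<Rightarrow>\<^sub>0 nat) \<Rightarrow> nat" where
  "tdeg m = (\<Sum>i\<in>Poly_Mapping.keys m. Poly_Mapping.lookup m i)"

text \<open>Homogeneous of (integer) degree \<open>k\<close>; for \<open>k < 0\<close> only \<open>0\<close> qualifies.\<close>
definition homogeneous :: "int \<Rightarrow> mpoly \<Rightarrow> bool" where
  "homogeneous k A \<longleftrightarrow> (\<forall>m \<in> Poly_Mapping.keys A. int (tdeg m) = k)"

definition var :: "nat \<Rightarrow> mpoly" where
  "var i = Poly_Mapping.single (Poly_Mapping.single i 1) 1"

definition const :: "rat \<Rightarrow> mpoly" where
  "const c = Poly_Mapping.single 0 c"

definition fprime :: "nat \<Rightarrow> mpoly poly" where
  "fprime d = (\<Prod>i\<in>{1..d-1}. [:- var i, 1:])"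

text \<open>\<open>f_s\<close>: the antiderivative of \<open>f_s'\<close> with \<open>f_s(0) = 0\<close>, i.e.
  coefficient of \<open>x^(k+1)\<close> is \<open>1/(k+1)\<close> times the coefficient of \<open>x^k\<close> in \<open>f_s'\<close>.\<close>
definition f_s :: "nat \<Rightarrow> mpoly poly" where
  "f_s d = (\<Sum>k<d. monom (const (1 / of_nat (k+1)) * coeff (fprime d) k) (k+1))"

definition F :: "nat \<Rightarrow> nat \<Rightarrow> mpoly" where
  "F d i = poly (f_s d) (var i)"

end

theory Submission
  imports Defs
begin


locale ringS =
  fixes S :: "'a::idom set"
  assumes S0: "0 \<in> S" and S1: "1 \<in> S"
    and Sadd: "a \<in> S \<Longrightarrow> b \<in> S \<Longrightarrow> a + b \<in> S"
    and Smult: "a \<in> S \<Longrightarrow> b \<in> S \<Longrightarrow> a * b \<in> S"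
    and Sneg: "a \<in> S \<Longrightarrow> - a \<in> S"
begin

lemma Sdiff: "a \<in> S \<Longrightarrow> b \<in> S \<Longrightarrow> a - b \<in> S"
  using Sadd[of a "-b"] Sneg[of b] by simp

lemma Ssum: "(\<And>i. i \<in> A \<Longrightarrow> f i \<in> S) \<Longrightarrow> sum f A \<in> S"
  by (induction A rule: infinite_finite_induct) (auto simp: S0 Sadd)

lemma Sprod: "(\<And>i. i \<in> A \<Longrightarrow> f i \<in> S) \<Longrightarrow> prod f A \<in> S"
  by (induction A rule: infinite_finite_induct) (auto simp: S1 Smult)

lemma Spow: "a \<in> S \<Longrightarrow> a ^ n \<in> S"
  by (induction n) (auto simp: S1 Smult)

lemma Snat: "of_nat n \<in> S"
  by (induction n) (auto simp: S0 S1 Sadd)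

definition pS :: "'a poly \<Rightarrow> bool" where
  "pS p \<longleftrightarrow> (\<forall>i. coeff p i \<in> S)"

lemma pS_coeff: "pS p \<Longrightarrow> coeff p i \<in> S"
  by (simp add: pS_def)

lemma pS_0[simp]: "pS 0" by (simp add: pS_def S0)
lemma pS_1[simp]: "pS 1" by (simp add: pS_def coeff_1 S0 S1)
lemma pS_add: "pS p \<Longrightarrow> pS q \<Longrightarrow> pS (p + q)" by (simp add: pS_def Sadd)
lemma pS_diff: "pS p \<Longrightarrow> pS q \<Longrightarrow> pS (p - q)" by (simp add: pS_def Sdiff)
lemma pS_neg: "pS p \<Longrightarrow> pS (- p)" by (simp add: pS_def Sneg)
lemma pS_mult: "pS p \<Longrightarrow> pS q \<Longrightarrow> pS (p * q)"
  unfolding pS_def coeff_mult by (auto intro!: Ssum Smult)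
lemma pS_pCons: "a \<in> S \<Longrightarrow> pS p \<Longrightarrow> pS (pCons a p)"
  by (auto simp: pS_def coeff_pCons split: nat.splits)
lemma pS_const: "a \<in> S \<Longrightarrow> pS [:a:]"
  by (simp add: pS_pCons)
lemma pS_lin: "a \<in> S \<Longrightarrow> b \<in> S \<Longrightarrow> pS [:a, b:]"
  by (simp add: pS_pCons)
lemma pS_smult: "a \<in> S \<Longrightarrow> pS p \<Longrightarrow> pS (smult a p)"
  by (simp add: pS_def Smult)
lemma pS_monom: "a \<in> S \<Longrightarrow> pS (monom a n)"
  by (simp add: pS_def coeff_monom S0)
lemma pS_pow: "pS p \<Longrightarrow> pS (p ^ n)"
  by (induction n) (auto intro: pS_mult)
lemma pS_prod: "(\<And>i. i \<in> A \<Longrightarrow> pS (f i)) \<Longrightarrow> pS (prod f A)"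
  by (induction A rule: infinite_finite_induct) (auto intro: pS_mult)
lemma pS_sum: "(\<And>i. i \<in> A \<Longrightarrow> pS (f i)) \<Longrightarrow> pS (sum f A)"
  by (induction A rule: infinite_finite_induct) (auto intro: pS_add)
lemma pS_pderiv: "pS p \<Longrightarrow> pS (pderiv p)"
  unfolding pS_def coeff_pderiv by (metis Smult Snat)
lemma poly_S: "pS p \<Longrightarrow> x \<in> S \<Longrightarrow> poly p x \<in> S"
  by (induction p) (auto simp: pS_def Sadd Smult coeff_pCons split: nat.splits)
lemma pS_synth: "pS p \<Longrightarrow> c \<in> S \<Longrightarrow> pS (synthetic_div p c)"
proof (induction p)
  case 0 then show ?case by simp
next
  case (pCons a p)
  have "pS p" using pCons.prems by (auto simp: pS_def coeff_pCons split: nat.splits)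
  then show ?case using pCons by (auto intro!: pS_pCons poly_S)
qed

end


locale primeS = ringS S for S :: "'a::idom set" +
  fixes P :: "'a set"
  assumes P_S: "p \<in> P \<Longrightarrow> p \<in> S" and P0: "0 \<in> P"
    and Padd: "p \<in> P \<Longrightarrow> q \<in> P \<Longrightarrow> p + q \<in> P"
    and Pmult: "a \<in> S \<Longrightarrow> p \<in> P \<Longrightarrow> a * p \<in> P"
    and P1: "1 \<notin> P"
    and Pprime: "a \<in> S \<Longrightarrow> b \<in> S \<Longrightarrow> a * b \<in> P \<Longrightarrow> a \<in> P \<or> b \<in> P"
begin

lemma Pmult': "a \<in> S \<Longrightarrow> p \<in> P \<Longrightarrow> p * a \<in> P"
  using Pmult by (simp add: mult.commute)
lemma Pneg: "p \<in> P \<Longrightarrow> - p \<in> P"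
  using Pmult[of "-1" p] Sneg[OF S1] by simp
lemma Pdiff: "p \<in> P \<Longrightarrow> q \<in> P \<Longrightarrow> p - q \<in> P"
  using Padd[of p "-q"] Pneg[of q] by simp
lemma Psum: "(\<And>i. i \<in> A \<Longrightarrow> f i \<in> P) \<Longrightarrow> sum f A \<in> P"
  by (induction A rule: infinite_finite_induct) (auto simp: P0 Padd)
lemma Ppow: "a \<in> S \<Longrightarrow> a ^ n \<in> P \<Longrightarrow> a \<in> P"
proof (induction n)
  case 0 then show ?case using P1 by simp
next
  case (Suc n) then show ?case using Pprime[of a "a^n"] Spow by auto
qed
lemma Pprod_not: "finite A \<Longrightarrow> (\<And>i. i \<in> A \<Longrightarrow> f i \<in> S \<and> f i \<notin> P) \<Longrightarrow> prod f A \<notin> P"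
proof (induction A rule: finite_induct)
  case empty then show ?case using P1 by simp
next
  case (insert x F)
  have "prod f F \<in> S" using insert.prems by (intro Sprod) auto
  then show ?case using insert Pprime[of "f x" "prod f F"] by auto
qed

definition pP :: "'a poly \<Rightarrow> bool" where
  "pP p \<longleftrightarrow> (\<forall>i. coeff p i \<in> P)"

lemma pP_pS: "pP p \<Longrightarrow> pS p" by (simp add: pP_def pS_def P_S)
lemma pP_0[simp]: "pP 0" by (simp add: pP_def P0)
lemma pP_add: "pP p \<Longrightarrow> pP q \<Longrightarrow> pP (p + q)" by (simp add: pP_def Padd)
lemma pP_diff: "pP p \<Longrightarrow> pP q \<Longrightarrow> pP (p - q)" by (simp add: pP_def Pdiff)
lemma pP_neg: "pP p \<Longrightarrow> pP (- p)" by (simp add: pP_def Pneg)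
lemma pP_mult: "pS p \<Longrightarrow> pP q \<Longrightarrow> pP (p * q)"
  unfolding pP_def pS_def coeff_mult by (auto intro!: Psum Pmult)
lemma pP_mult': "pP p \<Longrightarrow> pS q \<Longrightarrow> pP (p * q)"
  using pP_mult[of q p] by (simp add: mult.commute)
lemma pP_smult: "a \<in> S \<Longrightarrow> pP p \<Longrightarrow> pP (smult a p)"
  by (simp add: pP_def Pmult)
lemma pP_pderiv: "pP p \<Longrightarrow> pP (pderiv p)"
  unfolding pP_def coeff_pderiv by (metis Pmult Snat)
lemma pP_pCons: "pP (pCons a p) \<longleftrightarrow> a \<in> P \<and> pP p"
  unfolding pP_def by (auto simp: coeff_pCons split: nat.splits)
lemma poly_P: "pP p \<Longrightarrow> x \<in> S \<Longrightarrow> poly p x \<in> P"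
  by (induction p) (auto simp: pP_pCons P0 intro!: Padd Pmult)
lemma pP_const: "a \<in> P \<Longrightarrow> pP [:a:]"
  by (simp add: pP_def coeff_pCons P0 split: nat.splits)
lemma pP_monom: "a \<in> P \<Longrightarrow> pP (monom a n)"
  by (simp add: pP_def coeff_monom P0)

definition cong :: "'a poly \<Rightarrow> 'a poly \<Rightarrow> bool" (infix "\<approx>" 50) where
  "p \<approx> q \<longleftrightarrow> pS p \<and> pS q \<and> pP (p - q)"

lemma cong_refl: "pS p \<Longrightarrow> p \<approx> p" by (simp add: cong_def)
lemma cong_sym: "p \<approx> q \<Longrightarrow> q \<approx> p"
  unfolding cong_def using pP_neg by fastforce
lemma cong_trans: "p \<approx> q \<Longrightarrow> q \<approx> r \<Longrightarrow> p \<approx> r"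
  unfolding cong_def using pP_add by fastforce
lemma cong_add: "p \<approx> q \<Longrightarrow> p' \<approx> q' \<Longrightarrow> p + p' \<approx> q + q'"
  unfolding cong_def using pP_add[of "p - q" "p' - q'"] by (auto intro: pS_add simp: algebra_simps)
lemma cong_diff: "p \<approx> q \<Longrightarrow> p' \<approx> q' \<Longrightarrow> p - p' \<approx> q - q'"
  unfolding cong_def using pP_diff[of "p - q" "p' - q'"] by (auto intro: pS_diff simp: algebra_simps)
lemma cong_mult: "p \<approx> q \<Longrightarrow> p' \<approx> q' \<Longrightarrow> p * p' \<approx> q * q'"
proof -
  assume a: "p \<approx> q" "p' \<approx> q'"
  have "p * p' - q * q' = p * (p' - q') + (p - q) * q'" by (simp add: algebra_simps)
  moreover have "pP (p * (p' - q') + (p - q) * q')"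
    using a unfolding cong_def by (intro pP_add pP_mult pP_mult') auto
  ultimately show ?thesis using a unfolding cong_def by (auto intro: pS_mult)
qed
lemma cong_smult: "a \<in> S \<Longrightarrow> p \<approx> q \<Longrightarrow> smult a p \<approx> smult a q"
  unfolding cong_def using pP_smult[of a "p - q"] by (auto intro: pS_smult simp: smult_diff_right)
lemma cong_pderiv: "p \<approx> q \<Longrightarrow> pderiv p \<approx> pderiv q"
  unfolding cong_def using pP_pderiv[of "p - q"] by (auto intro: pS_pderiv simp: pderiv_diff)
lemma cong_pow: "p \<approx> q \<Longrightarrow> p ^ n \<approx> q ^ n"
  by (induction n) (auto intro: cong_mult cong_refl)
lemma cong_prod: "finite A \<Longrightarrow> (\<And>i. i \<in> A \<Longrightarrow> f i \<approx> g i) \<Longrightarrow> prod f A \<approx> prod g A"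
  by (induction A rule: finite_induct) (auto intro: cong_mult cong_refl)
lemma cong_poly: "p \<approx> q \<Longrightarrow> x \<in> S \<Longrightarrow> poly p x - poly q x \<in> P"
  unfolding cong_def using poly_P[of "p - q" x] by simp
lemma cong_pP: "p \<approx> q \<Longrightarrow> pP q \<Longrightarrow> pP p"
  unfolding cong_def using pP_add[of "p - q" q] by simp
lemma cong_zero: "pS p \<Longrightarrow> p \<approx> 0 \<longleftrightarrow> pP p"
  unfolding cong_def by (auto dest: pP_pS)
lemma cong_const: "a \<in> S \<Longrightarrow> b \<in> S \<Longrightarrow> a - b \<in> P \<Longrightarrow> [:a:] \<approx> [:b:]"
  unfolding cong_def by (auto intro!: pS_const pP_const)

end


context primeS
begin

lemma top_lemma:
  assumes G: "lead_coeff G = 1" "pS G" and Q: "pS Q"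
    and hyp: "\<forall>i\<ge>degree G. coeff (G*Q) i \<in> P"
  shows "pP Q"
  using Q hyp
proof (induction "degree Q" arbitrary: Q rule: less_induct)
  case less
  show ?case
  proof (cases "Q = 0")
    case True thus ?thesis by simp
  next
    case False
    define t where "t = degree Q"
    define a where "a = lead_coeff Q"
    have "coeff (G*Q) (degree G + t) = a"
      using coeff_mult_degree_sum[of G Q] G by (simp add: t_def a_def)
    hence aP: "a \<in> P" using less.prems by auto
    define Q1 where "Q1 = Q - monom a t"
    have Q1S: "pS Q1" unfolding Q1_def using less.prems aP P_S by (auto intro!: pS_diff pS_monom)
    have hm: "coeff (G * monom a t) i \<in> P" for i
      using aP G P0 by (auto simp: mult.commute[of G] coeff_monom_mult intro!: Pmult' pS_coeff)
    have c1: "\<forall>i\<ge>degree G. coeff (G*Q1) i \<in> P"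
      using less.prems hm by (auto simp: Q1_def algebra_simps intro!: Pdiff)
    have hQ1: "coeff Q1 i = 0" if "i \<ge> t" for i
      using that by (cases "i = t") (auto simp: Q1_def coeff_monom a_def t_def coeff_eq_0)
    have "pP Q1"
    proof (cases "t = 0")
      case True
      hence "Q1 = 0" using hQ1 by (intro poly_eqI) simp
      thus ?thesis by simp
    next
      case False
      hence "degree Q1 \<le> t - 1" using hQ1 by (intro degree_le) auto
      hence "degree Q1 < degree Q" using False t_def by simp
      thus ?thesis using less.hyps Q1S c1 by blast
    qed
    moreover have "Q = Q1 + monom a t" by (simp add: Q1_def)
    ultimately show ?thesis using pP_add pP_monom aP by metis
  qed
qed

lemma cancel_lemma:
  assumes "lead_coeff M = 1" "pS M" "pS Y" "pP (M * Y)"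
  shows "pP Y"
  using top_lemma[of M Y] assms by (auto simp: pP_def)

lemma cancel_cong:
  assumes "lead_coeff M = 1" "pS M" "M * Y \<approx> M * Z" "pS Y" "pS Z"
  shows "Y \<approx> Z"
  using cancel_lemma[of M "Y - Z"] assms by (auto simp: cong_def algebra_simps intro: pS_diff)

lemma synth_cong:
  assumes "pS q" "r \<in> S" "poly q r \<in> P"
  shows "q \<approx> [:-r,1:] * synthetic_div q r"
proof -
  have "q - [:-r,1:] * synthetic_div q r = [:poly q r:]"
    using synthetic_div_correct'[of r q] by (simp add: algebra_simps)
  moreover have "pS ([:-r,1:] * synthetic_div q r)"
    using assms by (intro pS_mult pS_synth pS_lin Sneg S1)
  ultimately show ?thesis using assms unfolding cong_def
    by (auto intro!: pP_const)
qed

lemma lin_monic[simp]: "lead_coeff ([:-r,1:] ^ k :: 'a poly) = 1"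
  by (subst lead_coeff_power) simp

lemma pS_X: "r \<in> S \<Longrightarrow> pS ([:-r,1:] ^ k)"
  by (intro pS_pow pS_lin Sneg S1)

lemma pderiv_Xk:
  "pderiv ([:-r,1:] ^ Suc k * W) = [:-r,1:] ^ k * ([:-r,1:] * pderiv W + smult (of_nat (Suc k)) W)"
  by (simp add: pderiv_mult pderiv_power_Suc pderiv_pCons algebra_simps del: of_nat_Suc power_Suc)
     (simp add: algebra_simps)

end

locale primeD = primeS S P for S :: "'a::idom set" and P +
  fixes d :: nat and iv :: "nat \<Rightarrow> 'a"
  assumes iv: "1 \<le> k \<Longrightarrow> k \<le> d \<Longrightarrow> iv k \<in> S \<and> of_nat k * iv k = 1"
begin

lemma Pnat_cancel: "1 \<le> k \<Longrightarrow> k \<le> d \<Longrightarrow> a \<in> S \<Longrightarrow> of_nat k * a \<in> P \<Longrightarrow> a \<in> P"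
proof -
  assume a: "1 \<le> k" "k \<le> d" "a \<in> S" "of_nat k * a \<in> P"
  have "a = iv k * (of_nat k * a)" using iv[OF a(1,2)] by (metis mult.assoc mult.commute mult_1)
  moreover have "iv k * (of_nat k * a) \<in> P" using Pmult iv a by blast
  ultimately show "a \<in> P" by metis
qed

lemma taylor_P:
  assumes p: "pS p" and r: "r \<in> S" and pr: "poly p r \<in> P" and V: "pS V"
    and der: "pderiv p \<approx> [:-r,1:]^e * V" and e: "e + 1 \<le> d"
  shows "\<exists>W. pS W \<and> p \<approx> [:-r,1:]^(e+1) * W"
proof -
  define X where "X = [:-r,1:]"
  have XS: "pS (X^k)" for k unfolding X_def using pS_X r by simp
  have XSS: "pS X" unfolding X_def using pS_lin Sneg S1 r by simp
  have "\<exists>W. pS W \<and> p \<approx> X^k * W" if "k \<le> e + 1" for k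
    using that
  proof (induction k)
    case 0 then show ?case using p by (auto intro!: cong_refl)
  next
    case (Suc k)
    then obtain W where W: "pS W" "p \<approx> X^k * W" by auto
    show ?case
    proof (cases k)
      case 0
      then show ?thesis using synth_cong[OF p r pr] pS_synth[OF p r] by (auto simp: X_def)
    next
      case (Suc k')
      have "pderiv p \<approx> pderiv (X^k * W)" using W(2) by (rule cong_pderiv)
      also have "pderiv (X^k * W) = X^k' * (X * pderiv W + smult (of_nat k) W)"
        using pderiv_Xk[of r k' W] Suc by (simp add: X_def)
      finally have c1: "pderiv p \<approx> X^k' * (X * pderiv W + smult (of_nat k) W)" .
      have "e - k' = Suc (e - k)" using Suc.prems Suc by simp
      hence "e = k' + Suc (e - k)" using Suc.prems Suc by simp
      hence "X^e = X^k' * (X * X^(e-k))" by (metis power_add power_Suc)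
      hence "X^e * V = X^k' * (X * (X^(e-k) * V))" by (simp add: mult.assoc)
      with der have c2: "pderiv p \<approx> X^k' * (X * (X^(e-k) * V))" by (simp add: X_def)
      have "X * pderiv W + smult (of_nat k) W \<approx> X * (X^(e-k) * V)"
      proof (rule cancel_cong[of "X^k'"])
        show "lead_coeff (X ^ k') = 1" by (simp add: X_def)
        show "pS (X ^ k')" by (rule XS)
        show "X ^ k' * (X * pderiv W + smult (of_nat k) W) \<approx> X ^ k' * (X * (X ^ (e - k) * V))"
          using cong_trans[OF cong_sym[OF c1] c2] .
        show "pS (X * pderiv W + smult (of_nat k) W)"
          using W XSS by (intro pS_add pS_mult pS_pderiv pS_smult Snat)
        show "pS (X * (X ^ (e - k) * V))" using XSS XS V by (intro pS_mult)
      qed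
      from cong_poly[OF this r] have "of_nat k * poly W r \<in> P"
        by (simp add: X_def)
      hence "poly W r \<in> P" using Pnat_cancel[of k "poly W r"] Suc.prems poly_S[OF W(1) r] Suc e by auto
      from synth_cong[OF W(1) r this] have "W \<approx> X * synthetic_div W r" by (simp add: X_def)
      hence "X^k * W \<approx> X^k * (X * synthetic_div W r)" using XS by (intro cong_mult cong_refl)
      hence "p \<approx> X^k * (X * synthetic_div W r)" using W cong_trans by blast
      hence "p \<approx> X^Suc k * synthetic_div W r" by (simp add: mult.assoc mult.commute mult.left_commute)
      thus ?thesis using pS_synth[OF W(1) r] by auto
    qed
  qed
  from this[of "e+1"] show ?thesis unfolding X_def by blast
qed

end


context primeD
begin

lemma lin_cong: "a \<in> S \<Longrightarrow> b \<in> S \<Longrightarrow> a - b \<in> P \<Longrightarrow> [:-a,1:] \<approx> [:-b,1:]"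
  unfolding cong_def by (auto intro!: pS_lin Sneg S1 simp: pP_pCons P0 pP_def[symmetric])
    (metis Pneg minus_diff_eq)

lemma divisibility:
  fixes J :: "'b set" and s :: "'b \<Rightarrow> 'a"
  assumes J: "finite J" and sS: "\<And>j. j \<in> J \<Longrightarrow> s j \<in> S"
    and d: "d = card J + 1"
    and f: "pS f" "pderiv f = (\<Prod>j\<in>J. [:-s j,1:])"
    and fz: "\<And>j. j \<in> J \<Longrightarrow> poly f (s j) \<in> P"
    and K: "K \<subseteq> J"
  shows "\<exists>q. pS q \<and> f \<approx> (\<Prod>j\<in>K. [:-s j,1:]) * q"
proof -
  have finK: "finite K" using K J finite_subset by blast
  from finK K show ?thesis
  proof (induction K rule: finite_subset_induct')
    case empty then show ?case using f by (auto intro!: cong_refl)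
  next
    case (insert k K)
    define r where "r = s k"
    have r: "r \<in> S" using sS insert by (simp add: r_def)
    define X where "X = [:-r,1:]"
    have XS: "pS X" unfolding X_def using r by (intro pS_lin Sneg S1)
    have XkS: "pS (X^m)" for m using XS by (rule pS_pow)
    have LS: "pS [:-s j,1:]" if "j \<in> J" for j using sS[OF that] by (intro pS_lin Sneg S1)
    define A where "A = {j\<in>K. s j - r \<in> P}"
    define B where "B = K - A"
    have KJ: "K \<subseteq> J" using insert by auto
    have finA: "finite A" "finite B" using insert A_def B_def by auto
    have AK: "A \<subseteq> K" "B \<subseteq> K" "A \<inter> B = {}" "K = A \<union> B" using A_def B_def by auto
    have congA: "(\<Prod>j\<in>A. [:-s j,1:]) \<approx> X ^ card A"
    proof -
      have "(\<Prod>j\<in>A. [:-s j,1:]) \<approx> (\<Prod>j\<in>A. X)"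
        using finA(1) by (rule cong_prod) (use A_def KJ sS r in \<open>auto simp: X_def intro!: lin_cong\<close>)
      thus ?thesis by simp
    qed
    define U where "U = (\<Prod>j\<in>B. [:-s j,1:])"
    have US: "pS U" unfolding U_def using AK KJ LS by (intro pS_prod) auto
    have PK: "(\<Prod>j\<in>K. [:-s j,1:]) = (\<Prod>j\<in>A. [:-s j,1:]) * U"
      unfolding U_def using AK finA by (metis prod.union_disjoint)
    have PKc: "(\<Prod>j\<in>K. [:-s j,1:]) \<approx> X ^ card A * U"
      unfolding PK using congA US by (intro cong_mult cong_refl)
    define A' where "A' = insert k A"
    have A'J: "A' \<subseteq> J" using A_def insert A'_def by auto
    have kA: "k \<notin> A" using insert A_def by auto
    have cardA': "card A' = card A + 1" using A'_def kA finA by simp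
    have cardle: "card A' \<le> card J" using A'J J by (rule card_mono[rotated])
    define V where "V = (\<Prod>j\<in>J - A'. [:-s j,1:])"
    have VS: "pS V" unfolding V_def using LS by (intro pS_prod) auto
    have G: "(\<Prod>j\<in>J. [:-s j,1:]) = (\<Prod>j\<in>A'. [:-s j,1:]) * V"
      unfolding V_def using prod.subset_diff[OF A'J J] by (simp only: mult.commute)
    have pA': "(\<Prod>j\<in>A'. [:-s j,1:]) = X * (\<Prod>j\<in>A. [:-s j,1:])"
      unfolding A'_def X_def r_def by (rule prod.insert[OF finA(1) kA])
    have congA': "(\<Prod>j\<in>A'. [:-s j,1:]) \<approx> X ^ (card A + 1)"
      unfolding pA' using cong_mult[OF cong_refl[OF XS] congA] by simp
    have Gc: "pderiv f \<approx> X ^ (card A + 1) * V"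
      unfolding f G using congA' VS by (intro cong_mult cong_refl)
    have "poly f r \<in> P" using fz insert by (simp add: r_def)
    from taylor_P[OF f(1) r this VS Gc[unfolded X_def]] cardA' cardle d
    obtain W where W: "pS W" "f \<approx> X ^ (card A + 1 + 1) * W" by (auto simp: X_def)
    obtain q where q: "pS q" "f \<approx> (\<Prod>j\<in>K. [:-s j,1:]) * q" using insert.IH by auto
    have "f \<approx> X ^ card A * (U * q)"
      using cong_trans[OF q(2) cong_mult[OF PKc cong_refl[OF q(1)]]] by (simp add: mult.assoc)
    moreover have "X ^ (card A + 1 + 1) * W = X ^ card A * (X * (X * W))"
      by (simp add: power_add mult.assoc mult.commute mult.left_commute)
    ultimately have "X ^ card A * (U * q) \<approx> X ^ card A * (X * (X * W))"
      using W by (metis cong_sym cong_trans)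
    moreover have "lead_coeff (X ^ card A) = 1" by (simp add: X_def)
    ultimately have c: "U * q \<approx> X * (X * W)"
      using cancel_cong[of "X ^ card A" "U * q" "X * (X * W)"] US q XS W XkS
      by (meson pS_mult)
    have "poly (U * q) r - poly (X * (X * W)) r \<in> P" by (rule cong_poly[OF c r])
    hence Uq: "poly U r * poly q r \<in> P" by (simp add: X_def)
    have "poly U r \<notin> P"
      unfolding U_def poly_prod
    proof (rule Pprod_not[OF finA(2)])
      fix j assume j: "j \<in> B"
      hence jS: "s j \<in> S" using AK KJ sS by auto
      have "s j - r \<notin> P" using j by (auto simp: B_def A_def)
      hence "r - s j \<notin> P" using Pneg by fastforce
      thus "poly [:- s j, 1:] r \<in> S \<and> poly [:- s j, 1:] r \<notin> P"
        using jS r by (auto intro: Sdiff)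
    qed
    hence qr: "poly q r \<in> P" using Pprime[OF poly_S[OF US r] poly_S[OF q(1) r] Uq] by auto
    have "q \<approx> X * synthetic_div q r" using synth_cong[OF q(1) r qr] by (simp add: X_def)
    moreover have PKS: "pS (\<Prod>j\<in>K. [:-s j,1:])" using KJ LS by (intro pS_prod) auto
    ultimately have "f \<approx> (\<Prod>j\<in>K. [:-s j,1:]) * (X * synthetic_div q r)"
      using q(2) cong_trans cong_mult cong_refl by blast
    moreover have "(\<Prod>j\<in>insert k K. [:-s j,1:]) = X * (\<Prod>j\<in>K. [:-s j,1:])"
      unfolding X_def r_def by (rule prod.insert) (use insert in auto)
    hence "(\<Prod>j\<in>K. [:-s j,1:]) * (X * synthetic_div q r) = (\<Prod>j\<in>insert k K. [:-s j,1:]) * synthetic_div q r"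
      by (simp only: mult.assoc mult.commute mult.left_commute)
    ultimately show ?case using pS_synth[OF q(1) r] by auto
  qed
qed

end


context primeD
begin

lemma unit_unique: "1 \<le> k \<Longrightarrow> k \<le> d \<Longrightarrow> of_nat k * x = 1 \<Longrightarrow> x = iv k"
  using iv[of k] by (metis mult.assoc mult.commute mult_1)

lemma Xpderiv: "X * pderiv (X^k * D) = X^k * (X * pderiv D + smult (of_nat k) D)"
  if "X = [:-c, 1:]" for X :: "'a poly"
proof (cases k)
  case 0 then show ?thesis by simp
next
  case (Suc k')
  then show ?thesis using pderiv_Xk[of c k' D] that
    by (simp only: power_Suc mult.assoc mult.commute mult.left_commute)
qed

theorem domain_main:
  fixes J :: "'b set" and s :: "'b \<Rightarrow> 'a"
  assumes J: "finite J" "J \<noteq> {}" and sS: "\<And>j. j \<in> J \<Longrightarrow> s j \<in> S"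
    and d: "d = card J + 1"
    and f: "pS f" "pderiv f = (\<Prod>j\<in>J. [:-s j,1:])" "degree f \<le> d" "poly f 0 = 0"
    and fz: "\<And>j. j \<in> J \<Longrightarrow> poly f (s j) \<in> P"
    and j: "j \<in> J"
  shows "s j \<in> P"
proof -
  define n where "n = card J"
  have n1: "n \<ge> 1" using J by (simp add: n_def card_gt_0_iff Suc_le_eq)
  have dn: "d = n + 1" using d n_def by simp
  define G where "G = (\<Prod>j\<in>J. [:-s j,1:])"
  have GS: "pS G" unfolding G_def using sS by (intro pS_prod pS_lin Sneg S1) auto
  have degG: "degree G = n" unfolding G_def n_def
    by (subst degree_prod_sum_eq) auto
  have lcG: "lead_coeff G = 1" unfolding G_def by (simp add: lead_coeff_prod)
  obtain q where q: "pS q" "f \<approx> G * q"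
    using divisibility[OF J(1) sS d f(1,2) fz, of J] by (auto simp: G_def)
  have cG: "coeff G i = of_nat (Suc i) * coeff f (Suc i)" for i
    by (metis G_def coeff_pderiv f(2))
  have fd: "coeff f d = iv d"
    using cG[of n] lcG degG dn unit_unique[of d] by simp
  define g where "g = coeff G (n - 1)"
  have gS: "g \<in> S" using GS by (simp add: g_def pS_coeff)
  have fn: "coeff f n = iv n * g"
  proof -
    have "g = of_nat n * coeff f n" using cG[of "n-1"] n1 by (simp add: g_def)
    hence "iv n * g = (iv n * of_nat n) * coeff f n" by (simp add: mult.assoc)
    thus ?thesis using iv[of n] n1 dn by (simp add: mult.commute)
  qed
  have ivS: "iv n \<in> S" "iv d \<in> S" using iv[of n] iv[of d] n1 dn by auto
  define c where "c = - (g * iv n)"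
  have cS: "c \<in> S" unfolding c_def using gS ivS by (intro Sneg Smult)
  define Xc where "Xc = [:-c, 1:]"
  have XcS: "pS Xc" unfolding Xc_def using cS by (intro pS_lin Sneg S1)
  define L where "L = smult (iv d) (G * Xc)"
  have LS: "pS L" unfolding L_def using GS XcS ivS by (intro pS_smult pS_mult)
  have cGX: "coeff (G * Xc) i = - c * coeff G i + (if i = 0 then 0 else coeff G (i - 1))" for i
  proof -
    have "G * Xc = smult (-c) G + pCons 0 G" unfolding Xc_def by (simp add: algebra_simps)
    thus ?thesis by (cases i) auto
  qed
  define h where "h = f - L"
  have hz: "coeff h i = 0" if ige: "i \<ge> n" for i
  proof -
    consider "i = n" | "i = d" | "i > d" using ige dn by linarith
    then show ?thesis
    proof cases
      case 1
      have "coeff L n = iv d * (- c * 1 + g)"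
        unfolding L_def using cGX[of n] lcG degG n1 by (simp add: g_def)
      also have "\<dots> = iv d * g * (1 + iv n)" by (simp add: c_def algebra_simps)
      also have "1 + iv n = of_nat d * iv n"
        using iv[of n] n1 dn by (simp add: algebra_simps)
      also have "iv d * g * (of_nat d * iv n) = (iv d * of_nat d) * (iv n * g)"
        by (simp add: algebra_simps)
      also have "\<dots> = iv n * g" using iv[of d] dn by (simp add: mult.commute)
      finally show ?thesis using 1 fn by (simp add: h_def)
    next
      case 2
      have "coeff L d = iv d"
        unfolding L_def using cGX[of d] lcG degG dn by (simp add: coeff_eq_0)
      thus ?thesis using 2 fd by (simp add: h_def)
    next
      case 3
      have "coeff L i = 0" unfolding L_def using cGX[of i] degG dn 3 by (simp add: coeff_eq_0)
      moreover have "coeff f i = 0" using f(3) 3 by (simp add: coeff_eq_0)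
      ultimately show ?thesis by (simp add: h_def)
    qed
  qed
  define Q' where "Q' = q - smult (iv d) Xc"
  have Q'S: "pS Q'" unfolding Q'_def using q XcS ivS by (intro pS_diff pS_smult)
  have GQ': "G * Q' = (G * q - f) + h"
    by (simp add: Q'_def h_def L_def algebra_simps)
  have pGq: "pP (G * q - f)" using q(2) by (auto simp: cong_def pP_neg dest: pP_neg)
  have "pP Q'"
  proof (rule top_lemma[OF lcG GS Q'S], intro allI impI)
    fix i assume "degree G \<le> i"
    hence "coeff h i = 0" using hz degG by auto
    thus "coeff (G * Q') i \<in> P" using pGq unfolding GQ' by (simp add: pP_def)
  qed
  hence "pP (G * Q')" using GS by (rule pP_mult[rotated])
  hence "pP h" using pGq unfolding GQ' by (metis add_diff_cancel_left' pP_diff)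
  hence fL: "f \<approx> L" using f(1) LS by (simp add: cong_def h_def)
  have "pderiv f \<approx> pderiv L" using fL by (rule cong_pderiv)
  moreover have pX: "pderiv Xc = 1" by (simp add: Xc_def pderiv_pCons)
  have "pderiv L = smult (iv d) (G + Xc * pderiv G)"
    by (simp add: L_def pderiv_smult pderiv_mult pX)
  ultimately have "G \<approx> smult (iv d) (G + Xc * pderiv G)"
    by (simp add: f(2) G_def[symmetric])
  hence "smult (of_nat d) G \<approx> smult (of_nat d) (smult (iv d) (G + Xc * pderiv G))"
    by (rule cong_smult[OF Snat])
  also have "smult (of_nat d) (smult (iv d) (G + Xc * pderiv G)) = G + Xc * pderiv G"
    using iv[of d] dn by simp
  finally have "smult (of_nat d) G - G \<approx> G + Xc * pderiv G - G"
    using GS by (intro cong_diff cong_refl)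
  moreover have "smult (of_nat d) G - G = smult (of_nat n) G"
    using dn by (simp add: smult_add_left)
  ultimately have ode: "smult (of_nat n) G \<approx> Xc * pderiv G"
    by simp
  define \<Delta> where "\<Delta> = G - Xc ^ n"
  have XnS: "pS (Xc ^ k)" for k using XcS by (rule pS_pow)
  have \<Delta>S: "pS \<Delta>" unfolding \<Delta>_def using GS XnS by (rule pS_diff)
  have odeX: "smult (of_nat n) (Xc ^ n) = Xc * pderiv (Xc ^ n)"
  proof -
    obtain m where m: "n = Suc m" using n1 by (cases n) auto
    have "pderiv (Xc ^ Suc m) = smult (of_nat (Suc m)) (Xc ^ m)"
      using pderiv_power_Suc[of Xc m] pX by simp
    thus ?thesis unfolding m by (simp add: mult_smult_right)
  qed
  have ode\<Delta>: "smult (of_nat n) \<Delta> \<approx> Xc * pderiv \<Delta>"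
  proof -
    have "smult (of_nat n) G - smult (of_nat n) (Xc ^ n) \<approx> Xc * pderiv G - Xc * pderiv (Xc ^ n)"
      using ode odeX XnS XcS by (intro cong_diff) (auto intro!: cong_refl pS_smult Snat pS_mult pS_pderiv)
    thus ?thesis by (simp add: \<Delta>_def pderiv_diff smult_diff_right right_diff_distrib)
  qed
  have "\<exists>D. pS D \<and> \<Delta> \<approx> Xc ^ k * D" if "k \<le> n" for k
    using that
  proof (induction k)
    case 0 then show ?case using \<Delta>S by (auto intro: cong_refl)
  next
    case (Suc k)
    then obtain D where D: "pS D" "\<Delta> \<approx> Xc ^ k * D" by auto
    have "smult (of_nat n) \<Delta> \<approx> smult (of_nat n) (Xc ^ k * D)" using D(2) by (rule cong_smult[OF Snat])
    hence c1: "Xc ^ k * smult (of_nat n) D \<approx> smult (of_nat n) \<Delta>" by (simp add: cong_sym)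
    have "Xc * pderiv \<Delta> \<approx> Xc * pderiv (Xc ^ k * D)"
      using D(2) XcS by (intro cong_mult cong_refl cong_pderiv)
    also have "Xc * pderiv (Xc ^ k * D) = Xc ^ k * (Xc * pderiv D + smult (of_nat k) D)"
      by (rule Xpderiv) (simp add: Xc_def)
    finally have "Xc ^ k * smult (of_nat n) D \<approx> Xc ^ k * (Xc * pderiv D + smult (of_nat k) D)"
      using c1 ode\<Delta> cong_trans by blast
    hence c2: "smult (of_nat n) D \<approx> Xc * pderiv D + smult (of_nat k) D"
      using cancel_cong[of "Xc ^ k"] XnS D XcS
      by (metis Xc_def lin_monic pS_add pS_mult pS_pderiv pS_smult Snat)
    have "poly (smult (of_nat n) D) c - poly (Xc * pderiv D + smult (of_nat k) D) c \<in> P"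
      by (rule cong_poly[OF c2 cS])
    hence "of_nat n * poly D c - of_nat k * poly D c \<in> P" by (simp add: Xc_def)
    moreover have "of_nat n * poly D c - of_nat k * poly D c = of_nat (n - k) * poly D c"
      using Suc.prems by (simp add: of_nat_diff algebra_simps)
    ultimately have "of_nat (n - k) * poly D c \<in> P" by simp
    hence "poly D c \<in> P" using Pnat_cancel[of "n - k" "poly D c"] Suc.prems dn poly_S[OF D(1) cS] by auto
    from synth_cong[OF D(1) cS this] have "D \<approx> Xc * synthetic_div D c" by (simp add: Xc_def)
    hence "Xc ^ k * D \<approx> Xc ^ k * (Xc * synthetic_div D c)" using XnS by (intro cong_mult cong_refl)
    hence "\<Delta> \<approx> Xc ^ k * (Xc * synthetic_div D c)" using D(2) cong_trans by blast
    hence "\<Delta> \<approx> Xc ^ Suc k * synthetic_div D c" by (simp add: mult.assoc mult.commute mult.left_commute)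
    thus ?case using pS_synth[OF D(1) cS] by blast
  qed
  then obtain D where D: "pS D" "\<Delta> \<approx> Xc ^ n * D" by blast
  have deg\<Delta>: "coeff \<Delta> i = 0" if "i \<ge> n" for i
  proof -
    have "degree (Xc ^ n) = n" by (simp add: Xc_def degree_linear_power)
    moreover have "lead_coeff (Xc ^ n) = 1" by (simp add: Xc_def)
    ultimately show ?thesis using that lcG degG
      by (cases "i = n") (auto simp: \<Delta>_def coeff_eq_0)
  qed
  have "pP D"
  proof (rule top_lemma[of "Xc ^ n"])
    show "lead_coeff (Xc ^ n) = 1" by (simp add: Xc_def)
    show "pS (Xc ^ n)" by (rule XnS)
    show "pS D" by (rule D(1))
    show "\<forall>i\<ge>degree (Xc ^ n). coeff (Xc ^ n * D) i \<in> P"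
    proof (intro allI impI)
      fix i assume "degree (Xc ^ n) \<le> i"
      hence "i \<ge> n" by (simp add: Xc_def degree_linear_power)
      hence "coeff \<Delta> i = 0" by (rule deg\<Delta>)
      moreover have "pP (Xc ^ n * D - \<Delta>)" using D(2) by (auto simp: cong_def dest: pP_neg)
      ultimately show "coeff (Xc ^ n * D) i \<in> P" by (auto simp: pP_def dest: spec[of _ i])
    qed
  qed
  hence "pP (Xc ^ n * D)" by (rule pP_mult[OF XnS])
  hence "pP \<Delta>" using D(2) by (rule cong_pP[rotated])
  hence GX: "G \<approx> Xc ^ n" using GS XnS by (simp add: cong_def \<Delta>_def)
  have "L \<approx> smult (iv d) (Xc ^ n * Xc)"
    unfolding L_def using GX XcS ivS by (intro cong_smult cong_mult cong_refl)
  hence "f \<approx> smult (iv d) (Xc ^ n * Xc)" using fL cong_trans by blast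
  from cong_poly[OF this S0] have "- (iv d * (- c) ^ d) \<in> P"
    using f(4) dn by (simp add: Xc_def)
  hence "iv d * (- c) ^ d \<in> P" using Pneg by fastforce
  hence "of_nat d * (iv d * (- c) ^ d) \<in> P" using Pmult Snat by blast
  hence "(- c) ^ d \<in> P" using iv[of d] dn by (simp add: mult.assoc[symmetric])
  hence "- c \<in> P" using Ppow Sneg cS by blast
  hence cP: "c \<in> P" using Pneg by fastforce
  have "Xc \<approx> [:0, 1:]" unfolding Xc_def using cS cP
    by (simp add: cong_def pS_lin Sneg S1 S0 pP_pCons P0 Pneg)
  hence "G \<approx> [:0, 1:] ^ n" using GX cong_trans cong_pow by blast
  moreover have "(\<Prod>ja\<in>J. s j - s ja) = 0" using j J(1) by (auto simp: prod_zero_iff)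
  ultimately have "- (s j ^ n) \<in> P" using cong_poly[OF _ sS[OF j], of G "[:0, 1:] ^ n"]
    by (simp add: G_def poly_prod)
  hence "s j ^ n \<in> P" using Pneg by fastforce
  thus ?thesis using Ppow sS[OF j] by blast
qed

end


context ringS
begin

definition idealS :: "'a set \<Rightarrow> bool" where
  "idealS I \<longleftrightarrow> I \<subseteq> S \<and> 0 \<in> I \<and> (\<forall>a\<in>I. \<forall>b\<in>I. a + b \<in> I) \<and> (\<forall>t\<in>S. \<forall>a\<in>I. t * a \<in> I)"

lemma exists_prime:
  assumes I: "idealS I" and x: "x \<in> S" and nil: "\<forall>k. x ^ k \<notin> I"
  shows "\<exists>P. primeS S P \<and> I \<subseteq> P \<and> x \<notin> P"
proof -
  define \<A> where "\<A> = {J. idealS J \<and> I \<subseteq> J \<and> (\<forall>k. x ^ k \<notin> J)}"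
  have "\<A> \<noteq> {}" using I nil by (auto simp: \<A>_def)
  moreover have "\<Union>\<C> \<in> \<A>" if C: "\<C> \<noteq> {}" "subset.chain \<A> \<C>" for \<C>
  proof -
    have CA: "\<C> \<subseteq> \<A>" and ch: "\<forall>X\<in>\<C>. \<forall>Y\<in>\<C>. X \<subseteq> Y \<or> Y \<subseteq> X"
      using C(2) by (auto simp: subset_chain_def)
    have "idealS (\<Union>\<C>)"
      unfolding idealS_def
    proof (intro conjI ballI)
      show "\<Union>\<C> \<subseteq> S" using CA by (auto simp: \<A>_def idealS_def)
      show "0 \<in> \<Union>\<C>" using CA C(1) by (auto simp: \<A>_def idealS_def)
      fix a b assume a: "a \<in> \<Union>\<C>" and b: "b \<in> \<Union>\<C>"
      then obtain X Y where X: "X \<in> \<C>" "a \<in> X" and Y: "Y \<in> \<C>" "b \<in> Y" by auto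
      from ch X Y have "X \<subseteq> Y \<or> Y \<subseteq> X" by auto
      hence "a \<in> X \<and> b \<in> X \<or> a \<in> Y \<and> b \<in> Y" using X Y by auto
      moreover have "idealS X" "idealS Y" using X Y CA by (auto simp: \<A>_def)
      ultimately show "a + b \<in> \<Union>\<C>"
        using X Y unfolding idealS_def by (metis UnionI)
    next
      fix t a assume t: "t \<in> S" and a: "a \<in> \<Union>\<C>"
      then obtain X where X: "X \<in> \<C>" "a \<in> X" by auto
      moreover have "idealS X" using X CA by (auto simp: \<A>_def)
      ultimately show "t * a \<in> \<Union>\<C>" using t unfolding idealS_def by (metis UnionI)
    qed
    thus ?thesis using CA C(1) by (auto simp: \<A>_def)
  qed
  ultimately obtain M where M: "M \<in> \<A>" and max: "\<And>X. X \<in> \<A> \<Longrightarrow> M \<subseteq> X \<Longrightarrow> X = M"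
    using subset_Zorn_nonempty[of \<A>] by blast
  have Mi: "idealS M" "I \<subseteq> M" "\<forall>k. x ^ k \<notin> M" using M by (auto simp: \<A>_def)
  have gen: "\<exists>k. x ^ k \<in> {p + t * a | p t. p \<in> M \<and> t \<in> S}" if a: "a \<in> S" "a \<notin> M" for a
  proof (rule ccontr)
    assume nk: "\<not> ?thesis"
    define Ja where "Ja = {p + t * a | p t. p \<in> M \<and> t \<in> S}"
    have "idealS Ja" unfolding idealS_def
    proof (intro conjI ballI)
      show "Ja \<subseteq> S" using Mi(1) a by (auto simp: Ja_def idealS_def intro!: Sadd Smult)
      show "0 \<in> Ja" using Mi(1) S0 unfolding Ja_def idealS_def by force
      fix u v assume "u \<in> Ja" "v \<in> Ja"
      then obtain p t p' t' where "u = p + t * a" "v = p' + t' * a" "p \<in> M" "t \<in> S" "p' \<in> M" "t' \<in> S"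
        by (auto simp: Ja_def)
      moreover have "u + v = (p + p') + (t + t') * a" using calculation by (simp add: algebra_simps)
      moreover have "p + p' \<in> M" "t + t' \<in> S" using calculation Mi(1) by (auto simp: idealS_def intro: Sadd)
      ultimately show "u + v \<in> Ja" unfolding Ja_def by blast
    next
      fix w u assume w: "w \<in> S" and "u \<in> Ja"
      then obtain p t where "u = p + t * a" "p \<in> M" "t \<in> S" by (auto simp: Ja_def)
      moreover have "w * u = (w * p) + (w * t) * a" using calculation by (simp add: algebra_simps)
      moreover have "w * p \<in> M" "w * t \<in> S" using calculation Mi(1) w by (auto simp: idealS_def intro: Smult)
      ultimately show "w * u \<in> Ja" unfolding Ja_def by blast
    qed
    moreover have "M \<subseteq> Ja" unfolding Ja_def
      using S0 by force
    moreover have "a \<in> Ja" unfolding Ja_def using Mi(1) S1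
      unfolding idealS_def by force
    ultimately have "Ja \<in> \<A>" using nk Mi by (auto simp: \<A>_def Ja_def)
    hence "Ja = M" using max \<open>M \<subseteq> Ja\<close> by blast
    thus False using \<open>a \<in> Ja\<close> a by simp
  qed
  have "primeS S M"
  proof (unfold_locales)
    show "p \<in> M \<Longrightarrow> p \<in> S" for p using Mi(1) by (auto simp: idealS_def)
    show "0 \<in> M" using Mi(1) by (auto simp: idealS_def)
    show "p \<in> M \<Longrightarrow> q \<in> M \<Longrightarrow> p + q \<in> M" for p q using Mi(1) by (auto simp: idealS_def)
    show "a \<in> S \<Longrightarrow> p \<in> M \<Longrightarrow> a * p \<in> M" for a p using Mi(1) by (auto simp: idealS_def)
    show "1 \<notin> M" using Mi(3)[rule_format, of 0] by simp
    show "a \<in> M \<or> b \<in> M" if ab: "a \<in> S" "b \<in> S" "a * b \<in> M" for a b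
    proof (rule ccontr)
      assume "\<not> (a \<in> M \<or> b \<in> M)"
      with gen ab obtain k l p t p' t' where
        k: "x ^ k = p + t * a" "p \<in> M" "t \<in> S" and l: "x ^ l = p' + t' * b" "p' \<in> M" "t' \<in> S"
        by blast
      have pS: "p \<in> S" "p' \<in> S" using k l Mi(1) by (auto simp: idealS_def)
      have "x ^ (k + l) = p * (p' + t' * b) + t * p' * a + (t * t') * (a * b)"
        by (simp add: power_add k l algebra_simps)
      moreover have "p * (p' + t' * b) \<in> M" using k l ab pS Mi(1)
        by (auto simp: idealS_def mult.commute[of p] intro!: Sadd Smult)
      moreover have "t * p' * a \<in> M" using k l ab pS Mi(1)
        by (auto simp: idealS_def mult.commute[of _ a] mult.assoc intro!: Smult)
      moreover have "(t * t') * (a * b) \<in> M" using k l ab Mi(1)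
        by (auto simp: idealS_def intro!: Smult)
      ultimately have "x ^ (k + l) \<in> M" using Mi(1) by (auto simp: idealS_def)
      thus False using Mi(3) by blast
    qed
  qed
  moreover have "x \<notin> M" using Mi(3)[rule_format, of 1] by simp
  ultimately show ?thesis using Mi(2) by blast
qed

end


context ringS
begin

lemma nilpotent_mod:
  fixes J :: "'b set" and s :: "'b \<Rightarrow> 'a" and d :: nat and iv :: "nat \<Rightarrow> 'a"
  assumes I: "idealS I"
    and iv: "\<And>k. 1 \<le> k \<Longrightarrow> k \<le> d \<Longrightarrow> iv k \<in> S \<and> of_nat k * iv k = 1"
    and J: "finite J" "J \<noteq> {}" and sS: "\<And>j. j \<in> J \<Longrightarrow> s j \<in> S"
    and d: "d = card J + 1"
    and f: "pS f" "pderiv f = (\<Prod>j\<in>J. [:-s j,1:])" "degree f \<le> d" "poly f 0 = 0"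
    and fz: "\<And>j. j \<in> J \<Longrightarrow> poly f (s j) \<in> I"
    and j: "j \<in> J"
  shows "\<exists>k. s j ^ k \<in> I"
proof (rule ccontr)
  assume "\<not> ?thesis"
  then obtain P where P: "primeS S P" "I \<subseteq> P" "s j \<notin> P"
    using exists_prime[OF I sS[OF j]] by blast
  interpret primeD S P d iv
    by (rule primeD.intro[OF P(1)]) (unfold_locales, rule iv)
  have "s j \<in> P" by (rule domain_main[OF J sS d f _ j]) (use fz P(2) in auto)
  thus False using P(3) by simp
qed

end




lemma Rd_int: "of_int a \<in> Rd d"
  unfolding Rd_def by (rule CollectI, rule exI[of _ a], rule exI[of _ 1]) auto

lemma Rd_0: "0 \<in> Rd d" using Rd_int[of 0] by simp
lemma Rd_1: "1 \<in> Rd d" using Rd_int[of 1] by simp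

lemma Rd_prime: "prime (p::nat) \<Longrightarrow> p dvd n * m \<Longrightarrow> (\<forall>p. prime p \<longrightarrow> p dvd n \<longrightarrow> p \<le> d)
   \<Longrightarrow> (\<forall>p. prime p \<longrightarrow> p dvd m \<longrightarrow> p \<le> d) \<Longrightarrow> p \<le> d"
  using prime_dvd_mult_iff by blast

lemma Rd_add: assumes "x \<in> Rd d" "y \<in> Rd d" shows "x + y \<in> Rd d"
proof -
  obtain a n b m where x: "n > 0" "x = of_int a / of_nat n" "\<forall>p. prime p \<longrightarrow> p dvd n \<longrightarrow> p \<le> d"
    and y: "m > 0" "y = of_int b / of_nat m" "\<forall>p. prime p \<longrightarrow> p dvd m \<longrightarrow> p \<le> d"
    using assms unfolding Rd_def by blast
  have "(of_int a / of_nat n + of_int b / of_nat m :: rat) = (of_int a * of_nat m + of_int b * of_nat n) / (of_nat n * of_nat m)"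
    using x(1) y(1) by (intro add_frac_eq) auto
  also have "\<dots> = of_int (a * int m + b * int n) / of_nat (n * m)" by simp
  finally have "x + y = of_int (a * int m + b * int n) / of_nat (n * m)" using x(2) y(2) by simp
  moreover have "\<forall>p. prime p \<longrightarrow> p dvd (n * m) \<longrightarrow> p \<le> d"
    using x(3) y(3) Rd_prime by blast
  moreover have "n * m > 0" using x(1) y(1) by simp
  ultimately show ?thesis unfolding Rd_def by blast
qed

lemma Rd_mult: assumes "x \<in> Rd d" "y \<in> Rd d" shows "x * y \<in> Rd d"
proof -
  obtain a n b m where x: "n > 0" "x = of_int a / of_nat n" "\<forall>p. prime p \<longrightarrow> p dvd n \<longrightarrow> p \<le> d"
    and y: "m > 0" "y = of_int b / of_nat m" "\<forall>p. prime p \<longrightarrow> p dvd m \<longrightarrow> p \<le> d"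
    using assms unfolding Rd_def by blast
  have "(of_int a / of_nat n * (of_int b / of_nat m) :: rat) = of_int (a * b) / of_nat (n * m)"
    by simp
  hence "x * y = of_int (a * b) / of_nat (n * m)" using x(2) y(2) by simp
  moreover have "\<forall>p. prime p \<longrightarrow> p dvd (n * m) \<longrightarrow> p \<le> d"
    using x(3) y(3) Rd_prime by blast
  moreover have "n * m > 0" using x(1) y(1) by simp
  ultimately show ?thesis unfolding Rd_def by blast
qed

lemma Rd_neg: assumes "x \<in> Rd d" shows "- x \<in> Rd d"
  using Rd_mult[OF Rd_int[of "-1"] assms] by simp

lemma Rd_inv: assumes "1 \<le> k" "k \<le> d" shows "1 / of_nat k \<in> Rd d"
proof -
  have "\<forall>p. prime p \<longrightarrow> p dvd k \<longrightarrow> p \<le> d"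
    using assms by (auto dest: dvd_imp_le)
  thus ?thesis unfolding Rd_def
    by (intro CollectI exI[of _ "1::int"] exI[of _ k]) (use assms in auto)
qed

definition goodS :: "nat \<Rightarrow> mpoly \<Rightarrow> bool" where
  "goodS d A \<longleftrightarrow> (\<forall>m. Poly_Mapping.lookup A m \<in> Rd d) \<and>
     (\<forall>m\<in>Poly_Mapping.keys A. Poly_Mapping.keys m \<subseteq> {1..d-1})"

lemma in_S_good: "in_S d A \<longleftrightarrow> goodS d A"
  unfolding in_S_def goodS_def
  by (metis Rd_0 not_in_keys_iff_lookup_eq_zero)

lemma good_0: "goodS d 0" by (simp add: goodS_def Rd_0)

lemma good_add: "goodS d A \<Longrightarrow> goodS d B \<Longrightarrow> goodS d (A + B)"
  unfolding goodS_def
proof (intro conjI)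
  assume a: "(\<forall>m. poly_mapping.lookup A m \<in> Rd d) \<and> (\<forall>m\<in>Poly_Mapping.keys A. Poly_Mapping.keys m \<subseteq> {1..d - 1})"
    "(\<forall>m. poly_mapping.lookup B m \<in> Rd d) \<and> (\<forall>m\<in>Poly_Mapping.keys B. Poly_Mapping.keys m \<subseteq> {1..d - 1})"
  thus "\<forall>m. poly_mapping.lookup (A + B) m \<in> Rd d" by (simp add: lookup_add Rd_add)
  show "\<forall>m\<in>Poly_Mapping.keys (A + B). Poly_Mapping.keys m \<subseteq> {1..d - 1}"
    using a keys_add[of A B] by blast
qed

lemma good_neg: "goodS d A \<Longrightarrow> goodS d (- A)"
  unfolding goodS_def by (auto intro: Rd_neg)

lemma good_single: "c \<in> Rd d \<Longrightarrow> Poly_Mapping.keys m \<subseteq> {1..d-1} \<Longrightarrow> goodS d (Poly_Mapping.single m c)"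
  unfolding goodS_def by (auto simp: lookup_single Rd_0 when_def)

lemma good_single_inv: "goodS d (Poly_Mapping.single m c) \<Longrightarrow> c \<noteq> 0 \<Longrightarrow> c \<in> Rd d \<and> Poly_Mapping.keys m \<subseteq> {1..d-1}"
  unfolding goodS_def by (metis keys_single lookup_single_eq singletonI)

lemma update_eq: "a \<notin> Poly_Mapping.keys f \<Longrightarrow> Poly_Mapping.update a b f = f + Poly_Mapping.single a b"
  by (rule poly_mapping_eqI) (auto simp: lookup_update lookup_add lookup_single when_def in_keys_iff)

lemma good_update: assumes "a \<notin> Poly_Mapping.keys f" "b \<noteq> 0" "goodS d (Poly_Mapping.update a b f)"
  shows "goodS d f" "goodS d (Poly_Mapping.single a b)"
proof -
  show "goodS d f" using assms unfolding goodS_def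
    by (auto simp: lookup_update in_keys_iff split: if_splits) (metis Rd_0)
  show "goodS d (Poly_Mapping.single a b)" using assms unfolding goodS_def
    by (auto simp: lookup_update in_keys_iff lookup_single when_def Rd_0 split: if_splits)
qed

lemma keys_plus_nat: "Poly_Mapping.keys (a + b :: nat \<Rightarrow>\<^sub>0 nat) \<subseteq> Poly_Mapping.keys a \<union> Poly_Mapping.keys b"
  by (rule keys_add)

lemma good_single_mult: assumes "goodS d (Poly_Mapping.single a b)" "goodS d B"
  shows "goodS d (Poly_Mapping.single a b * B)"
  using assms(2)
proof (induction B rule: update_induct)
  case const then show ?case by (simp add: good_0)
next
  case (update f c e)
  have gf: "goodS d f" "goodS d (Poly_Mapping.single c e)" using good_update update by auto
  have "Poly_Mapping.single a b * Poly_Mapping.update c e f =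
        Poly_Mapping.single a b * f + Poly_Mapping.single (a + c) (b * e)"
    using update by (simp add: update_eq distrib_left mult_single)
  moreover have "goodS d (Poly_Mapping.single (a + c) (b * e))"
  proof (cases "b = 0")
    case True thus ?thesis by (simp add: good_0)
  next
    case False
    have "b \<in> Rd d \<and> Poly_Mapping.keys a \<subseteq> {1..d-1}" using good_single_inv[OF assms(1) False] .
    moreover have "e \<in> Rd d \<and> Poly_Mapping.keys c \<subseteq> {1..d-1}" using good_single_inv[OF gf(2) update(2)] .
    ultimately have "Poly_Mapping.keys (a + c) \<subseteq> {1..d-1}" "b * e \<in> Rd d"
      using keys_plus_nat[of a c] by (blast, auto intro: Rd_mult)
    thus ?thesis by (rule good_single[rotated])
  qed
  ultimately show ?case using update gf by (auto intro: good_add)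
qed

lemma good_mult: assumes "goodS d A" "goodS d B" shows "goodS d (A * B)"
  using assms(1)
proof (induction A rule: update_induct)
  case const then show ?case by (simp add: good_0)
next
  case (update f a b)
  have gf: "goodS d f" "goodS d (Poly_Mapping.single a b)" using good_update update by auto
  have "Poly_Mapping.update a b f * B = f * B + Poly_Mapping.single a b * B"
    using update by (simp add: update_eq distrib_right)
  thus ?case using update gf good_single_mult[OF gf(2) assms(2)] by (auto intro: good_add)
qed

lemma ringS_S: "ringS {A. in_S d A}"
  by unfold_locales
    (auto simp: in_S_good good_add good_mult good_neg good_0 intro: good_single[of 1 d 0, simplified, OF Rd_1])


lemma var_S: "i \<in> {1..d-1} \<Longrightarrow> in_S d (var i)"
  unfolding in_S_good var_def by (rule good_single[OF Rd_1]) simp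

lemma const_S: "c \<in> Rd d \<Longrightarrow> in_S d (const c)"
  unfolding in_S_good const_def by (rule good_single) auto

lemma nat_const_inv: "k \<ge> 1 \<Longrightarrow> (of_nat k :: mpoly) * const (1 / of_nat k) = 1"
proof -
  assume k: "k \<ge> 1"
  have "(of_nat k :: mpoly) = Poly_Mapping.single 0 (of_nat k)" by (rule single_of_nat[symmetric])
  hence "(of_nat k :: mpoly) * const (1 / of_nat k) = Poly_Mapping.single 0 (of_nat k * (1 / of_nat k))"
    by (simp only: const_def mult_single add_0)
  also have "(of_nat k :: rat) * (1 / of_nat k) = 1" using k by simp
  finally show ?thesis by simp
qed

lemma pderiv_sum': "pderiv (sum f A) = (\<Sum>x\<in>A. pderiv (f x))"
  by (induction A rule: infinite_finite_induct) (auto simp: pderiv_add)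

lemma fprime_S: "ringS.pS {A. in_S d A} (fprime d)"
proof -
  interpret R: ringS "{A. in_S d A}" by (rule ringS_S)
  show ?thesis unfolding fprime_def
    by (intro R.pS_prod R.pS_lin R.Sneg R.S1) (auto intro: var_S)
qed

lemma var_nz: "var i \<noteq> 0"
  unfolding var_def by (metis lookup_single_eq lookup_zero zero_neq_one)

lemma degree_fprime: "degree (fprime d) = d - 1"
  unfolding fprime_def by (subst degree_prod_sum_eq) auto

lemma lead_fprime: "lead_coeff (fprime d) = 1"
  unfolding fprime_def by (simp add: lead_coeff_prod)

lemma pderiv_f_s: assumes "d \<ge> 1" shows "pderiv (f_s d) = fprime d"
proof -
  have "pderiv (f_s d) = (\<Sum>k<d. monom (coeff (fprime d) k) k)"
    unfolding f_s_def pderiv_sum' pderiv_monom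
  proof (rule sum.cong[OF refl])
    fix k assume "k \<in> {..<d}"
    have "(of_nat (k + 1) :: mpoly) * (const (1 / of_nat (k + 1)) * coeff (fprime d) k) = coeff (fprime d) k"
      using nat_const_inv[of "k+1"] by (simp only: mult.assoc[symmetric]) simp
    thus "monom (of_nat (k + 1) * (const (1 / of_nat (k + 1)) * coeff (fprime d) k)) (k + 1 - 1) =
          monom (coeff (fprime d) k) k" by simp
  qed
  also have "{..<d} = {..d-1}" using assms by auto
  also have "(\<Sum>k\<le>d-1. monom (coeff (fprime d) k) k) = fprime d"
    by (rule poly_as_sum_of_monoms') (simp add: degree_fprime)
  finally show ?thesis .
qed

lemma degree_f_s: "degree (f_s d) \<le> d"
  unfolding f_s_def by (rule degree_sum_le) (auto intro: order.trans[OF degree_monom_le])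

lemma poly_f_s_0: "poly (f_s d) 0 = 0"
  unfolding f_s_def poly_0_coeff_0 coeff_sum by (simp add: coeff_monom)

lemma f_s_S: "ringS.pS {A. in_S d A} (f_s d)"
proof -
  interpret R: ringS "{A. in_S d A}" by (rule ringS_S)
  show ?thesis unfolding f_s_def
  proof (intro R.pS_sum R.pS_monom)
    fix k assume "k \<in> {..<d}"
    hence "in_S d (const (1 / of_nat (k + 1)))" by (intro const_S Rd_inv) auto
    moreover have "in_S d (coeff (fprime d) k)" using fprime_S[of d] R.pS_coeff by auto
    ultimately show "const (1 / of_nat (k + 1)) * coeff (fprime d) k \<in> {A. in_S d A}"
      using R.Smult by auto
  qed
qed

lemma F_S: "j \<in> {1..d-1} \<Longrightarrow> in_S d (F d j)"
proof -
  interpret R: ringS "{A. in_S d A}" by (rule ringS_S)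
  assume "j \<in> {1..d-1}"
  thus ?thesis unfolding F_def using R.poly_S[OF f_s_S] var_S by auto
qed


subsection \<open>Homogeneity\<close>

lemma tdeg_sum: "finite K \<Longrightarrow> Poly_Mapping.keys m \<subseteq> K \<Longrightarrow> tdeg m = (\<Sum>i\<in>K. Poly_Mapping.lookup m i)"
  unfolding tdeg_def by (rule sum.mono_neutral_left) (auto simp: in_keys_iff)

lemma tdeg_add: "tdeg (a + b) = tdeg a + tdeg b"
proof -
  define K where "K = Poly_Mapping.keys a \<union> Poly_Mapping.keys b"
  have fK: "finite K" by (simp add: K_def)
  have "tdeg (a + b) = (\<Sum>i\<in>K. Poly_Mapping.lookup (a + b) i)"
    using keys_add[of a b] by (intro tdeg_sum fK) (auto simp: K_def)
  also have "\<dots> = (\<Sum>i\<in>K. Poly_Mapping.lookup a i) + (\<Sum>i\<in>K. Poly_Mapping.lookup b i)"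
    by (simp add: lookup_add sum.distrib)
  also have "\<dots> = tdeg a + tdeg b"
    using tdeg_sum[OF fK, of a] tdeg_sum[OF fK, of b] by (simp add: K_def)
  finally show ?thesis .
qed

lemma tdeg_single: "tdeg (Poly_Mapping.single i 1) = 1"
  by (simp add: tdeg_def)

lemma tdeg_0: "tdeg 0 = 0" by (simp add: tdeg_def)

lemma hom_0: "homogeneous e 0" by (simp add: homogeneous_def)

lemma hom_add: "homogeneous e X \<Longrightarrow> homogeneous e Y \<Longrightarrow> homogeneous e (X + Y)"
  unfolding homogeneous_def using keys_add[of X Y] by blast

lemma hom_neg: "homogeneous e X \<Longrightarrow> homogeneous e (- X)"
  unfolding homogeneous_def by simp

lemma hom_sum: "(\<And>i. i \<in> A \<Longrightarrow> homogeneous e (f i)) \<Longrightarrow> homogeneous e (sum f A)"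
  by (induction A rule: infinite_finite_induct) (auto intro: hom_add hom_0)

lemma hom_mult: "homogeneous a X \<Longrightarrow> homogeneous b Y \<Longrightarrow> homogeneous (a + b) (X * Y)"
  unfolding homogeneous_def
proof
  fix m assume hX: "\<forall>m\<in>Poly_Mapping.keys X. int (tdeg m) = a"
    and hY: "\<forall>m\<in>Poly_Mapping.keys Y. int (tdeg m) = b" and m: "m \<in> Poly_Mapping.keys (X * Y)"
  then obtain u v where "m = u + v" "u \<in> Poly_Mapping.keys X" "v \<in> Poly_Mapping.keys Y"
    using keys_mult[of X Y] by blast
  thus "int (tdeg m) = a + b" using hX hY by (simp add: tdeg_add)
qed

lemma hom_pow: "homogeneous a X \<Longrightarrow> homogeneous (int n * a) (X ^ n)"
proof (induction n)
  case 0 then show ?case by (simp add: homogeneous_def tdeg_0)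
next
  case (Suc n) then show ?case using hom_mult[of a X "int n * a" "X ^ n"] by (simp add: algebra_simps)
qed

lemma hom_1: "homogeneous 0 1" by (simp add: homogeneous_def tdeg_0)

lemma hom_var: "homogeneous 1 (var i)"
  by (simp add: homogeneous_def var_def tdeg_def)

lemma hom_const: "homogeneous 0 (const c)"
  by (simp add: homogeneous_def const_def tdeg_0)

lemma hom_neg_deg: "e < 0 \<Longrightarrow> homogeneous e X \<Longrightarrow> X = 0"
  unfolding homogeneous_def by (metis keys_eq_empty all_not_in_conv of_nat_less_0_iff)

definition phom :: "nat \<Rightarrow> mpoly poly \<Rightarrow> bool" where
  "phom N p \<longleftrightarrow> (\<forall>k. homogeneous (int N - int k) (coeff p k))"

lemma phom_1: "phom 0 1"
  unfolding phom_def by (auto simp: coeff_1 hom_1 hom_0)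

lemma phom_lin: "phom 1 [:- var i, 1:]"
  unfolding phom_def
proof
  fix k show "homogeneous (int 1 - int k) (coeff [:- var i, 1:] k)"
    by (cases k) (auto simp: hom_neg hom_var hom_1 hom_0 coeff_pCons split: nat.splits)
qed

lemma phom_mult: assumes "phom N p" "phom M q" shows "phom (N + M) (p * q)"
  unfolding phom_def coeff_mult
proof (intro allI hom_sum)
  fix k i :: nat assume "i \<in> {..k}"
  hence "int (N + M) - int k = (int N - int i) + (int M - int (k - i))" by auto
  thus "homogeneous (int (N + M) - int k) (coeff p i * coeff q (k - i))"
    using assms hom_mult unfolding phom_def by metis
qed

lemma phom_prod: "finite A \<Longrightarrow> (\<And>i. i \<in> A \<Longrightarrow> phom 1 (f i)) \<Longrightarrow> phom (card A) (prod f A)"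
proof (induction A rule: finite_induct)
  case empty then show ?case by (simp add: phom_1)
next
  case (insert x F)
  have "phom (1 + card F) (f x * prod f F)" using insert by (intro phom_mult) auto
  thus ?case using insert by simp
qed

lemma phom_fprime: "phom (d - 1) (fprime d)"
  unfolding fprime_def using phom_prod[of "{1..d-1}" "\<lambda>i. [:- var i, 1:]"] phom_lin by simp

lemma hom_F: assumes "d \<ge> 1" shows "homogeneous (int d) (F d j)"
  unfolding F_def f_s_def poly_sum poly_monom
proof (rule hom_sum)
  fix k assume k: "k \<in> {..<d}"
  have "homogeneous (0 + (int (d - 1) - int k)) (const (1 / of_nat (k + 1)) * coeff (fprime d) k)"
    using hom_mult[OF hom_const phom_fprime[unfolded phom_def, rule_format]] .
  moreover have "homogeneous (int (k + 1) * 1) (var j ^ (k + 1))" by (rule hom_pow[OF hom_var])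
  ultimately have "homogeneous ((0 + (int (d - 1) - int k)) + int (k + 1) * 1)
     (const (1 / of_nat (k + 1)) * coeff (fprime d) k * var j ^ (k + 1))"
    by (rule hom_mult)
  moreover have "(0 + (int (d - 1) - int k)) + int (k + 1) * 1 = int d" using assms by simp
  ultimately show "homogeneous (int d) (const (1 / of_nat (k + 1)) * coeff (fprime d) k * var j ^ (k + 1))"
    by simp
qed

definition hpart :: "int \<Rightarrow> mpoly \<Rightarrow> mpoly" where
  "hpart e A = (\<Sum>m\<in>{m \<in> Poly_Mapping.keys A. int (tdeg m) = e}. Poly_Mapping.single m (Poly_Mapping.lookup A m))"

lemma lookup_hpart: "Poly_Mapping.lookup (hpart e A) m = (if int (tdeg m) = e then Poly_Mapping.lookup A m else 0)"
proof -
  have "Poly_Mapping.lookup (hpart e A) m =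
     (\<Sum>m'\<in>{m \<in> Poly_Mapping.keys A. int (tdeg m) = e}. (if m' = m then Poly_Mapping.lookup A m' else 0))"
    unfolding hpart_def lookup_sum by (intro sum.cong) (auto simp: lookup_single when_def)
  also have "\<dots> = (if m \<in> {m \<in> Poly_Mapping.keys A. int (tdeg m) = e} then Poly_Mapping.lookup A m else 0)"
    by (subst sum.delta) auto
  also have "\<dots> = (if int (tdeg m) = e then Poly_Mapping.lookup A m else 0)"
    by (auto simp: in_keys_iff)
  finally show ?thesis .
qed

lemma hpart_add: "hpart e (A + B) = hpart e A + hpart e B"
  by (rule poly_mapping_eqI) (simp add: lookup_hpart lookup_add)

lemma hpart_0: "hpart e 0 = 0"
  by (rule poly_mapping_eqI) (simp add: lookup_hpart)

lemma hpart_sum: "hpart e (sum f A) = (\<Sum>x\<in>A. hpart e (f x))"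
  by (induction A rule: infinite_finite_induct) (auto simp: hpart_add hpart_0)

lemma hpart_hom: "homogeneous e X \<Longrightarrow> hpart e X = X"
  unfolding homogeneous_def by (intro poly_mapping_eqI) (auto simp: lookup_hpart in_keys_iff)

lemma hpart_hom_other: "homogeneous e' X \<Longrightarrow> e' \<noteq> e \<Longrightarrow> hpart e X = 0"
  unfolding homogeneous_def by (intro poly_mapping_eqI) (auto simp: lookup_hpart in_keys_iff)

lemma hom_hpart: "homogeneous e (hpart e A)"
  unfolding homogeneous_def by (auto simp: in_keys_iff lookup_hpart split: if_splits)

lemma in_S_hpart: "in_S d A \<Longrightarrow> in_S d (hpart e A)"
  unfolding in_S_good goodS_def
  by (auto simp: lookup_hpart in_keys_iff Rd_0 split: if_splits)

lemma hom_single: "homogeneous (int (tdeg a)) (Poly_Mapping.single a b)"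
  by (simp add: homogeneous_def)

lemma hpart_mult_hom:
  assumes Fh: "homogeneous (int d) Fp"
  shows "hpart (int D) (B * Fp) = hpart (int D - int d) B * Fp"
proof (induction B rule: update_induct)
  case const then show ?case by (simp add: hpart_0)
next
  case (update f a b)
  have eq: "Poly_Mapping.update a b f = f + Poly_Mapping.single a b" using update(1) by (rule update_eq)
  have h1: "homogeneous (int (tdeg a) + int d) (Poly_Mapping.single a b * Fp)"
    by (rule hom_mult[OF hom_single Fh])
  have "hpart (int D) (Poly_Mapping.single a b * Fp) = hpart (int D - int d) (Poly_Mapping.single a b) * Fp"
  proof (cases "int (tdeg a) + int d = int D")
    case True
    hence e: "int D - int d = int (tdeg a)" by simp
    have "hpart (int D) (Poly_Mapping.single a b * Fp) = Poly_Mapping.single a b * Fp"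
      using hpart_hom[OF h1] True by simp
    moreover have "hpart (int D - int d) (Poly_Mapping.single a b) = Poly_Mapping.single a b"
      unfolding e by (rule hpart_hom[OF hom_single])
    ultimately show ?thesis by simp
  next
    case False
    hence "int (tdeg a) \<noteq> int D - int d" by simp
    thus ?thesis using False hpart_hom_other[OF h1] hpart_hom_other[OF hom_single[of a b]] by simp
  qed
  thus ?case unfolding eq using update(3) by (simp add: distrib_right hpart_add)
qed


definition Id :: "nat \<Rightarrow> mpoly set" where
  "Id d = {x. \<exists>B. (\<forall>j\<in>{1..d-1}. in_S d (B j)) \<and> x = (\<Sum>j\<in>{1..d-1}. B j * F d j)}"

lemma Id_ideal: "ringS.idealS {A. in_S d A} (Id d)"
proof -
  interpret R: ringS "{A. in_S d A}" by (rule ringS_S)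
  show ?thesis unfolding R.idealS_def
  proof (intro conjI ballI)
    show "Id d \<subseteq> {A. in_S d A}"
    proof
      fix x assume "x \<in> Id d"
      then obtain B where B: "\<forall>j\<in>{1..d-1}. in_S d (B j)" "x = (\<Sum>j\<in>{1..d-1}. B j * F d j)"
        unfolding Id_def by blast
      have "(\<Sum>j\<in>{1..d-1}. B j * F d j) \<in> {A. in_S d A}"
        by (rule R.Ssum) (use B F_S in \<open>auto intro: R.Smult[simplified]\<close>)
      thus "x \<in> {A. in_S d A}" using B by simp
    qed
    show "0 \<in> Id d" unfolding Id_def
      by (rule CollectI, rule exI[of _ "\<lambda>_. 0"]) (auto simp: in_S_def)
    fix a b assume "a \<in> Id d" "b \<in> Id d"
    then obtain B B' where "\<forall>j\<in>{1..d-1}. in_S d (B j)" "a = (\<Sum>j\<in>{1..d-1}. B j * F d j)"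
      "\<forall>j\<in>{1..d-1}. in_S d (B' j)" "b = (\<Sum>j\<in>{1..d-1}. B' j * F d j)" unfolding Id_def by blast
    thus "a + b \<in> Id d" unfolding Id_def
      by (intro CollectI exI[of _ "\<lambda>j. B j + B' j"])
        (auto simp: sum.distrib distrib_right intro: R.Sadd[simplified])
  next
    fix t a assume t: "t \<in> {A. in_S d A}" and "a \<in> Id d"
    then obtain B where "\<forall>j\<in>{1..d-1}. in_S d (B j)" "a = (\<Sum>j\<in>{1..d-1}. B j * F d j)"
      unfolding Id_def by blast
    thus "t * a \<in> Id d" unfolding Id_def using t
      by (intro CollectI exI[of _ "\<lambda>j. t * B j"])
        (auto simp: sum_distrib_left mult.assoc intro: R.Smult[simplified])
  qed
qed

lemma Id_F: assumes "j \<in> {1..d-1}" shows "F d j \<in> Id d"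
proof -
  have "(\<lambda>j'. (if j' = j then 1 else 0) * F d j') = (\<lambda>j'. if j' = j then F d j else 0)"
    by auto
  hence "(\<Sum>j'\<in>{1..d-1}. (if j' = j then 1 else 0) * F d j') = F d j"
    using assms by (simp only: sum.delta' finite_atLeastAtMost) simp
  moreover have "\<forall>j'\<in>{1..d-1}. in_S d (if j' = j then 1 else 0)"
    using ringS.S1[OF ringS_S] ringS.S0[OF ringS_S] by auto
  ultimately show ?thesis unfolding Id_def
    by (intro CollectI exI[of _ "\<lambda>j'. if j' = j then 1 else 0"] conjI) simp_all
qed

lemma nilp: assumes "d \<ge> 2" "i \<in> {1..d-1}" shows "\<exists>k. var i ^ k \<in> Id d"
proof -
  interpret R: ringS "{A. in_S d A}" by (rule ringS_S)
  show ?thesis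
  proof (rule R.nilpotent_mod[OF Id_ideal, where iv = "\<lambda>k. const (1 / of_nat k)" and d = d
        and J = "{1..d-1}" and s = var and f = "f_s d"])
    show "const (1 / of_nat k) \<in> {A. in_S d A} \<and> of_nat k * const (1 / of_nat k) = 1"
      if "1 \<le> k" "k \<le> d" for k
      using that by (auto intro!: const_S Rd_inv nat_const_inv)
    show "finite {1..d-1}" by simp
    show "{1..d-1} \<noteq> {}" using assms by simp
    show "var j \<in> {A. in_S d A}" if "j \<in> {1..d-1}" for j using that var_S by simp
    show "d = card {1..d-1} + 1" using assms by simp
    show "R.pS (f_s d)" by (rule f_s_S)
    show "pderiv (f_s d) = (\<Prod>j\<in>{1..d-1}. [:- var j, 1:])"
      using pderiv_f_s[of d] assms by (simp add: fprime_def)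
    show "degree (f_s d) \<le> d" by (rule degree_f_s)
    show "poly (f_s d) 0 = 0" by (rule poly_f_s_0)
    show "poly (f_s d) (var j) \<in> Id d" if "j \<in> {1..d-1}" for j
      using Id_F[OF that] by (simp add: F_def)
    show "i \<in> {1..d-1}" by (rule assms(2))
  qed
qed

theorem lemma2p3:
  fixes d :: nat
  assumes "d \<ge> 2"
  shows "\<exists>(D::nat) (A :: nat \<Rightarrow> nat \<Rightarrow> mpoly). D \<ge> 1 \<and>
           (\<forall>i\<in>{1..d-1}. \<forall>j\<in>{1..d-1}. in_S d (A i j) \<and> homogeneous (int D - int d) (A i j)) \<and>
           (\<forall>i\<in>{1..d-1}. var i ^ D = (\<Sum>j\<in>{1..d-1}. A i j * F d j))"
proof -
  interpret R: ringS "{A. in_S d A}" by (rule ringS_S)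
  have Iid: "R.idealS (Id d)" by (rule Id_ideal)
  from nilp[OF assms] obtain k where k: "\<forall>i\<in>{1..d-1}. var i ^ k i \<in> Id d"
    by metis
  define D where "D = 1 + (\<Sum>i\<in>{1..d-1}. k i)"
  have D1: "D \<ge> 1" by (simp add: D_def)
  have inI: "var i ^ D \<in> Id d" if i: "i \<in> {1..d-1}" for i
  proof -
    have "k i \<le> (\<Sum>i\<in>{1..d-1}. k i)" using i by (intro member_le_sum) auto
    hence "D = (D - k i) + k i" by (simp add: D_def)
    hence "var i ^ D = var i ^ (D - k i) * var i ^ k i" by (metis power_add)
    moreover have "var i ^ (D - k i) \<in> {A. in_S d A}" using var_S[OF i] by (intro R.Spow) simp
    ultimately show ?thesis using Iid k i unfolding R.idealS_def by auto
  qed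
  have "\<forall>i\<in>{1..d-1}. \<exists>B. (\<forall>j\<in>{1..d-1}. in_S d (B j)) \<and> var i ^ D = (\<Sum>j\<in>{1..d-1}. B j * F d j)"
    using inI unfolding Id_def by blast
  then obtain B where B: "\<forall>i\<in>{1..d-1}. (\<forall>j\<in>{1..d-1}. in_S d (B i j)) \<and>
       var i ^ D = (\<Sum>j\<in>{1..d-1}. B i j * F d j)"
    by metis
  define A where "A i j = hpart (int D - int d) (B i j)" for i j
  have "\<forall>i\<in>{1..d-1}. \<forall>j\<in>{1..d-1}. in_S d (A i j) \<and> homogeneous (int D - int d) (A i j)"
    using B by (auto simp: A_def in_S_hpart hom_hpart)
  moreover have "\<forall>i\<in>{1..d-1}. var i ^ D = (\<Sum>j\<in>{1..d-1}. A i j * F d j)"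
  proof
    fix i assume i: "i \<in> {1..d-1}"
    have "homogeneous (int D * 1) (var i ^ D)" by (rule hom_pow[OF hom_var])
    hence "var i ^ D = hpart (int D) (var i ^ D)" by (simp add: hpart_hom)
    also have "\<dots> = (\<Sum>j\<in>{1..d-1}. hpart (int D) (B i j * F d j))"
      using B i by (simp add: hpart_sum)
    also have "\<dots> = (\<Sum>j\<in>{1..d-1}. A i j * F d j)"
      using assms by (intro sum.cong refl) (simp add: A_def hpart_mult_hom[OF hom_F])
    finally show "var i ^ D = (\<Sum>j\<in>{1..d-1}. A i j * F d j)" .
  qed
  ultimately show ?thesis using D1 by blast
qed


end
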